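(* Let $n\ge1$ and let $\mu$ be the Möbius function of the finite poset $(\hat N^n,\le)$, where $\le$ is the componentwise order, and set $M(\vec v)=\mu((1,1,\dots,1),\vec v)$ (note $(1,\dots,1)$ is the minimum). Then for $\vec v=(v_1,\dots,v_n)\in\hat N^n$: if $v_i\in\{1,i\}$ for every $i$, then $M(\vec v)=(-1)^{t_{\vec v}}$ where $t_{\vec v}=\#\{i\ge2:\ v_i=i\}$; otherwise $M(\vec v)=0$.
   Context: $Y_n$ is the set of planar rooted binary trees with $n$ internal vertices ($n+1$ leaves) up to isotopy, with grafting $\tau_1\vee\tau_2$ (new root, left subtree $\tau_1$, right subtree $\tau_2$). A complete expression in $x_1,\dots,x_{n+1}$ is a full binary parenthesization of $x_1\cdots x_{n+1}$ (every product of two factors, including the outermost, in parentheses); trees correspond bijectively to complete expressions via $|\mapsto x_1$, $\tau_1\vee\tau_2\mapsto(E_1E_2)$ with consecutive relabelling. Name of $\tau\in Y_n$: the vector $\vec v\in\mathbb N^n$ with $v_i=i$ if at least one left parenthesis stands immediately left of $x_i$ in the complete expression of $\tau$; otherwise the rightmost of the right parentheses immediately following $x_i$ matches a left parenthesis in the run immediately preceding some $x_j$, and $v_i=j$. $\hat N^n$ is the set of names of trees of $Y_n$. The componentwise order is $\vec v\le\vec w$ iff $v_i\le w_i$ for all $i$ (this order on names corresponds to the Tamari order on trees). *)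

theory Defs
  imports Main
begin

datatype tree = Leaf | Node tree tree  (* Node t1 t2 = t1 \<or> t2 (grafting) *)

fun internal :: "tree \<Rightarrow> nat" where
  "internal Leaf = 0"
| "internal (Node l r) = Suc (internal l + internal r)"

fun leaves :: "tree \<Rightarrow> nat" where
  "leaves Leaf = 1"
| "leaves (Node l r) = leaves l + leaves r"

datatype tok = LP | RP | X nat

fun label :: "tok \<Rightarrow> nat" where
  "label (X i) = i"
| "label _ = 0"

fun expr_from :: "tree \<Rightarrow> nat \<Rightarrow> tok list" where
  "expr_from Leaf k = [X k]"
| "expr_from (Node l r) k = [LP] @ expr_from l k @ expr_from r (k + leaves l) @ [RP]"

definition expr :: "tree \<Rightarrow> tok list" where
  "expr t = expr_from t 1"

definition depth :: "tok list \<Rightarrow> nat \<Rightarrow> int" where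
  "depth e k = int (length (filter (\<lambda>c. c = LP) (take k e)))
             - int (length (filter (\<lambda>c. c = RP) (take k e)))"

definition pos :: "tok list \<Rightarrow> nat \<Rightarrow> nat" where
  "pos e i = (THE p. p < length e \<and> e ! p = X i)"

text \<open>The left parenthesis matching the right parenthesis at position q.\<close>
definition match :: "tok list \<Rightarrow> nat \<Rightarrow> nat" where
  "match e q = (THE m. m < q \<and> e ! m = LP \<and> depth e (Suc m) = depth e q \<and>
                     (\<forall>k. Suc m \<le> k \<and> k \<le> q \<longrightarrow> depth e (Suc m) \<le> depth e k))"

definition name_comp :: "tok list \<Rightarrow> nat \<Rightarrow> nat" where
  "name_comp e i =
     (let p = pos e i in
      if 0 < p \<and> e ! (p - 1) = LP then i
      else
        (let q = p + length (takeWhile (\<lambda>c. c = RP) (drop (Suc p) e));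
             \<comment> \<open>q: rightmost right parenthesis of the run immediately following x_i\<close>
             m = match e q;
             \<comment> \<open>the run of left parentheses containing m immediately precedes x_j\<close>
             r = m + length (takeWhile (\<lambda>c. c = LP) (drop m e))
         in label (e ! r)))"

text \<open>Name of a tree in Y_n, as a list [v_1, ..., v_n] (v_i = list index i-1).\<close>
definition tree_name :: "tree \<Rightarrow> nat list" where
  "tree_name t = map (name_comp (expr t)) [1..<Suc (internal t)]"

definition names :: "nat \<Rightarrow> nat list set" where
  "names n = tree_name ` {t. internal t = n}"

definition comp_le :: "nat list \<Rightarrow> nat list \<Rightarrow> bool" where
  "comp_le v w = list_all2 (\<le>) v w"

definition mobius :: "'a set \<Rightarrow> ('a \<Rightarrow> 'a \<Rightarrow> bool) \<Rightarrow> 'a \<Rightarrow> 'a \<Rightarrow> int" where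
  "mobius S le x = (THE f. \<forall>y. f y =
      (if y \<in> S \<and> x \<in> S \<and> le x y then
         (if y = x then 1 else - (\<Sum>z\<in>{z\<in>S. le x z \<and> le z y \<and> z \<noteq> y}. f z))
       else 0))"

end

theory Submission
  imports Defs
begin

fun nm :: "tree \<Rightarrow> nat \<Rightarrow> nat \<Rightarrow> nat" where
  "nm Leaf k i = k"
| "nm (Node l r) k i = (if i = k + leaves l + leaves r - 1 then k
     else if i < k + leaves l then nm l k i else nm r (k + leaves l) i)"

lemma leaves_internal: "leaves t = Suc (internal t)"
  by (induction t) auto

lemma leaves_pos: "leaves t \<ge> 1"
  by (simp add: leaves_internal)

fun dd :: "tok list \<Rightarrow> int" where
  "dd [] = 0"
| "dd (LP # w) = dd w + 1"
| "dd (RP # w) = dd w - 1"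
| "dd (X _ # w) = dd w"

lemma dd_append[simp]: "dd (a @ b) = dd a + dd b"
  by (induction a rule: dd.induct) auto

lemma dd_filter: "int (length (filter (\<lambda>c. c = LP) w)) - int (length (filter (\<lambda>c. c = RP) w)) = dd w"
  by (induction w rule: dd.induct) auto

lemma depth_dd: "depth e k = dd (take k e)"
  unfolding depth_def by (rule dd_filter)

lemma bal: "dd (expr_from t k) = 0 \<and> (\<forall>n. 0 \<le> dd (take n (expr_from t k)))"
proof (induction t arbitrary: k)
  case Leaf
  then show ?case by (auto simp: take_Cons')
next
  case (Node l r)
  let ?el = "expr_from l k" and ?er = "expr_from r (k + leaves l)"
  have z: "dd ?el = 0" "dd ?er = 0" using Node by auto
  have nn: "0 \<le> dd (take m (?el @ ?er))" for m
    using Node.IH[of k] Node.IH[of "k + leaves l"] by (simp add: take_append)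
  have "0 \<le> dd (take n (expr_from (Node l r) k))" for n
  proof (cases n)
    case 0 then show ?thesis by simp
  next
    case (Suc m)
    show ?thesis
    proof (cases "m \<le> length (?el @ ?er)")
      case True
      then have "take m ((?el @ ?er) @ [RP]) = take m (?el @ ?er)" by simp
      then show ?thesis using Suc nn[of m] by simp
    next
      case False
      then have "take m ((?el @ ?er) @ [RP]) = ?el @ ?er @ [RP]" by simp
      then show ?thesis using Suc z by simp
    qed
  qed
  then show ?case using z by simp
qed

lemma bal_node:
  assumes "0 < n" "n < length (expr_from (Node l r) k)"
  shows "1 \<le> dd (take n (expr_from (Node l r) k))"
proof -
  let ?el = "expr_from l k" and ?er = "expr_from r (k + leaves l)"
  obtain m where m: "n = Suc m" using assms by (cases n) auto
  have "m \<le> length (?el @ ?er)" using assms m by simp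
  then have "take m ((?el @ ?er) @ [RP]) = take m (?el @ ?er)" by simp
  moreover have "0 \<le> dd (take m (?el @ ?er))"
    using bal[of l k] bal[of r "k + leaves l"] by (simp add: take_append)
  ultimately show ?thesis using m by simp
qed

lemma lead: "\<exists>c rest. expr_from t j = replicate c LP @ X j # rest"
proof (induction t arbitrary: j)
  case Leaf then show ?case by (intro exI[of _ 0]) auto
next
  case (Node l r)
  obtain c rest where "expr_from l j = replicate c LP @ X j # rest" using Node by blast
  then show ?case by (intro exI[of _ "Suc c"]) auto
qed

lemma expr_ne: "expr_from t k \<noteq> []"
  by (cases t) auto

lemma last_expr: "last (expr_from t k) \<noteq> LP"
  by (cases t) auto

lemma hd_expr: "hd (expr_from t k) \<noteq> RP"
  by (cases t) auto

lemma nm_right: "nm t k (k + leaves t - 1) = k"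
  by (cases t) auto

lemma nm_left: "nm t k k = k"
  by (induction t arbitrary: k) (auto simp: leaves_internal)

lemma rightmost:
  "\<exists>W a. expr_from t k = W @ X (k + leaves t - 1) # replicate a RP \<and>
     (t = Leaf \<longrightarrow> W = [] \<and> a = 0) \<and> (t \<noteq> Leaf \<longrightarrow> 1 \<le> a \<and> W \<noteq> [] \<and> last W \<noteq> LP)"
proof (induction t arbitrary: k)
  case Leaf then show ?case by auto
next
  case (Node l r)
  obtain W a where Wa: "expr_from r (k + leaves l) = W @ X (k + leaves l + leaves r - 1) # replicate a RP"
    "(r = Leaf \<longrightarrow> W = [] \<and> a = 0)" "(r \<noteq> Leaf \<longrightarrow> 1 \<le> a \<and> W \<noteq> [] \<and> last W \<noteq> LP)"
    using Node.IH(2)[of "k + leaves l"] by auto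
  have e: "k + leaves (Node l r) - 1 = k + leaves l + leaves r - 1" by simp
  show ?case
  proof (cases "r = Leaf")
    case True
    then show ?thesis using Wa e last_expr[of l k] expr_ne[of l k]
      by (intro exI[of _ "LP # expr_from l k"] exI[of _ 1]) auto
  next
    case False
    then show ?thesis using Wa e
      by (intro exI[of _ "LP # expr_from l k @ W"] exI[of _ "Suc a"]) (auto simp: replicate_append_same[symmetric])
  qed
qed

lemma cnt: "length (filter ((=) (X i)) (expr_from t k)) = (if k \<le> i \<and> i < k + leaves t then 1 else 0)"
  by (induction t arbitrary: k) auto


lemma dec:
  assumes "k \<le> i" "i < k + leaves t - 1"
  shows "(\<exists>A B. expr_from t k = A @ LP # X i # B \<and> nm t k i = i) \<or>
    (\<exists>P s j W a C. expr_from t k = P @ expr_from s j @ C \<and> s \<noteq> Leaf \<and>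
       expr_from s j = W @ X i # replicate a RP \<and> 1 \<le> a \<and> W \<noteq> [] \<and> last W \<noteq> LP \<and>
       C \<noteq> [] \<and> hd C \<noteq> RP \<and> nm t k i = j)"
  using assms
proof (induction t arbitrary: k)
  case Leaf then show ?case by simp
next
  case (Node l r)
  let ?el = "expr_from l k" and ?er = "expr_from r (k + leaves l)"
  have lr: "leaves r \<ge> 1" "leaves l \<ge> 1" using leaves_pos by auto
  have ex: "expr_from (Node l r) k = LP # ?el @ ?er @ [RP]" by simp
  consider "i < k + leaves l - 1" | "i = k + leaves l - 1" | "k + leaves l \<le> i" by linarith
  then show ?case
  proof cases
    case 1
    have nmeq: "nm (Node l r) k i = nm l k i" using 1 lr by auto
    from Node.IH(1)[of k, OF Node.prems(1) 1] show ?thesis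
    proof (elim disjE exE conjE)
      fix A B assume "?el = A @ LP # X i # B" "nm l k i = i"
      then show ?thesis using nmeq ex
        by (intro disjI1 exI[of _ "LP # A"] exI[of _ "B @ ?er @ [RP]"]) auto
    next
      fix P s j W a C assume h: "?el = P @ expr_from s j @ C" "s \<noteq> Leaf"
       "expr_from s j = W @ X i # replicate a RP" "1 \<le> a" "W \<noteq> []" "last W \<noteq> LP"
       "C \<noteq> []" "hd C \<noteq> RP" "nm l k i = j"
      show ?thesis using h nmeq ex
        by (intro disjI2 exI[of _ "LP # P"] exI[of _ s] exI[of _ j] exI[of _ W] exI[of _ a]
            exI[of _ "C @ ?er @ [RP]"]) auto
    qed
  next
    case 2
    have nmeq: "nm (Node l r) k i = k" using 2 lr nm_right[of l k] by auto
    obtain W a where Wa: "?el = W @ X i # replicate a RP"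
      "(l = Leaf \<longrightarrow> W = [] \<and> a = 0)" "(l \<noteq> Leaf \<longrightarrow> 1 \<le> a \<and> W \<noteq> [] \<and> last W \<noteq> LP)"
      using rightmost[of l k] 2 by auto
    show ?thesis
    proof (cases "l = Leaf")
      case True
      then show ?thesis using Wa nmeq ex 2
        by (intro disjI1 exI[of _ "[]"] exI[of _ "?er @ [RP]"]) auto
    next
      case False
      then show ?thesis using Wa nmeq ex 2 expr_ne[of r "k + leaves l"] hd_expr[of r "k + leaves l"]
        by (intro disjI2 exI[of _ "[LP]"] exI[of _ l] exI[of _ k] exI[of _ W] exI[of _ a]
            exI[of _ "?er @ [RP]"]) auto
    qed
  next
    case 3
    have nmeq: "nm (Node l r) k i = nm r (k + leaves l) i" using 3 Node.prems lr by auto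
    have i2: "i < k + leaves l + leaves r - 1" using Node.prems by simp
    from Node.IH(2)[of "k + leaves l", OF 3 i2] show ?thesis
    proof (elim disjE exE conjE)
      fix A B assume "?er = A @ LP # X i # B" "nm r (k + leaves l) i = i"
      then show ?thesis using nmeq ex
        by (intro disjI1 exI[of _ "LP # ?el @ A"] exI[of _ "B @ [RP]"]) auto
    next
      fix P s j W a C assume h: "?er = P @ expr_from s j @ C" "s \<noteq> Leaf"
       "expr_from s j = W @ X i # replicate a RP" "1 \<le> a" "W \<noteq> []" "last W \<noteq> LP"
       "C \<noteq> []" "hd C \<noteq> RP" "nm r (k + leaves l) i = j"
      show ?thesis using h nmeq ex
        by (intro disjI2 exI[of _ "LP # ?el @ P"] exI[of _ s] exI[of _ j] exI[of _ W] exI[of _ a]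
            exI[of _ "C @ [RP]"]) auto
    qed
  qed
qed

lemma pos_eq:
  assumes "e = A @ X i # B" "X i \<notin> set A" "X i \<notin> set B"
  shows "pos e i = length A"
  unfolding pos_def
proof (rule the_equality)
  show "length A < length e \<and> e ! length A = X i" using assms by simp
next
  fix p assume p: "p < length e \<and> e ! p = X i"
  show "p = length A"
  proof (rule ccontr)
    assume ne: "p \<noteq> length A"
    show False
    proof (cases "p < length A")
      case True
      then have "A ! p = X i" using p assms by (simp add: nth_append)
      then show False using True assms(2) nth_mem by metis
    next
      case False
      then obtain d where d: "p = Suc (length A + d)" using ne by (metis add_Suc_right less_imp_Suc_add linorder_neqE_nat)
      then have "B ! d = X i" "d < length B" using p assms by (auto simp: nth_append)
      then show False using assms(3) nth_mem by metis
    qed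
  qed
qed

lemma depth_Suc_LP: "m < length e \<Longrightarrow> e ! m = LP \<Longrightarrow> depth e (Suc m) = depth e m + 1"
  by (simp add: depth_dd take_Suc_conv_app_nth)

lemma match_eq:
  assumes e: "e = P @ w @ C" and w: "w = expr_from (Node l r) j"
  shows "match e (length P + length w - 1) = length P"
proof -
  let ?q = "length P + length w - 1"
  have lw: "length w \<ge> 2" using w by simp
  have dk: "depth e k = dd P + dd (take (k - length P) w)" if "length P \<le> k" "k \<le> length P + length w" for k
  proof -
    have "take k e = P @ take (k - length P) (w @ C)" using e that by (simp add: take_append)
    also have "take (k - length P) (w @ C) = take (k - length P) w" using that by simp
    finally show ?thesis by (simp add: depth_dd)
  qed
  have dP: "depth e (length P) = dd P" using dk[of "length P"] by simp
  have ge: "depth e k \<ge> dd P + 1" if "Suc (length P) \<le> k" "k \<le> ?q" for k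
    using dk[of k] that bal_node[of "k - length P" l r j] w lw by simp
  have d1: "depth e (Suc (length P)) = dd P + 1"
    using dk[of "Suc (length P)"] lw w by simp
  have wb: "w = butlast w @ [RP]" using w by (simp add: butlast_append)
  have "dd w = 0" using bal w by blast
  then have "dd (butlast w) = 1" using wb by (metis dd.simps(1) dd.simps(3) dd_append diff_0 add_diff_cancel_left add_diff_cancel_right' add.commute eq_diff_eq)
  then have dq: "depth e ?q = dd P + 1"
    using dk[of ?q] lw by (simp add: butlast_conv_take)
  have eLP: "e ! length P = LP" using e w by simp
  have lq: "?q < length e" using e lw by simp
  show ?thesis
    unfolding match_def
  proof (rule the_equality)
    show "length P < ?q \<and> e ! length P = LP \<and> depth e (Suc (length P)) = depth e ?q \<and>
      (\<forall>k. Suc (length P) \<le> k \<and> k \<le> ?q \<longrightarrow> depth e (Suc (length P)) \<le> depth e k)"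
      using lw eLP d1 dq ge by auto
  next
    fix m assume m: "m < ?q \<and> e ! m = LP \<and> depth e (Suc m) = depth e ?q \<and>
      (\<forall>k. Suc m \<le> k \<and> k \<le> ?q \<longrightarrow> depth e (Suc m) \<le> depth e k)"
    show "m = length P"
    proof (rule ccontr)
      assume "m \<noteq> length P"
      then consider "m < length P" | "length P < m" by linarith
      then show False
      proof cases
        case 1
        then have "depth e (Suc m) \<le> depth e (length P)" using m lw by auto
        then show False using m dq dP by simp
      next
        case 2
        then have "depth e m \<ge> dd P + 1" using ge m by auto
        moreover have "depth e (Suc m) = depth e m + 1" using depth_Suc_LP m lq by auto
        ultimately show False using m dq by simp
      qed
    qed
  qed
qed

lemma tw_rep: "takeWhile (\<lambda>c. c = x) (replicate a x @ ys) = replicate a x @ takeWhile (\<lambda>c. c = x) ys"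
  by (induction a) auto

lemma name_nm:
  assumes "1 \<le> i" "i \<le> internal t"
  shows "name_comp (expr t) i = nm t 1 i"
proof -
  define e where "e = expr t"
  have ee: "e = expr_from t 1" by (simp add: e_def expr_def)
  have cnt1: "length (filter ((=) (X i)) e) = 1"
    using cnt[of i t 1] assms by (simp add: ee leaves_internal)
  have notin: "X i \<notin> set A \<and> X i \<notin> set B" if "e = A @ X i # B" for A B
    using cnt1 that by (auto simp: filter_empty_conv)
  have "i < 1 + leaves t - 1" using assms by (simp add: leaves_internal)
  from dec[of 1 i t, OF assms(1) this] have "name_comp e i = nm t 1 i"
  proof (elim disjE exE conjE)
    fix A B assume h: "expr_from t 1 = A @ LP # X i # B" "nm t 1 i = i"
    then have e1: "e = (A @ [LP]) @ X i # B" by (simp add: ee)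
    then have p: "pos e i = Suc (length A)" using notin[OF e1] pos_eq[OF e1] by simp
    have "e ! (pos e i - 1) = LP" using p e1 by (simp add: nth_append)
    then have "name_comp e i = i" using p unfolding name_comp_def Let_def by simp
    then show ?thesis using h by simp
  next
    fix P s j W a C assume h: "expr_from t 1 = P @ expr_from s j @ C" "s \<noteq> Leaf"
       "expr_from s j = W @ X i # replicate a RP" "1 \<le> a" "W \<noteq> []" "last W \<noteq> LP"
       "C \<noteq> []" "hd C \<noteq> RP" "nm t 1 i = j"
    have e1: "e = (P @ W) @ X i # (replicate a RP @ C)" using h by (simp add: ee)
    have p: "pos e i = length P + length W" using notin[OF e1] pos_eq[OF e1] by simp
    have nlp: "\<not> (0 < pos e i \<and> e ! (pos e i - 1) = LP)"
    proof -
      have "(P @ W) ! (length P + length W - 1) = last W" using h(5)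
        by (cases W rule: rev_cases) (auto simp: nth_append)
      moreover have "length P + length W - 1 < length (P @ W)" using h(5) by simp
      ultimately have "e ! (length P + length W - 1) = last W" using e1
        by (metis append.assoc nth_append_left)
      then show ?thesis using p h(6) by simp
    qed
    obtain c0 C' where C: "C = c0 # C'" "c0 \<noteq> RP" using h(7,8) by (cases C) auto
    have dr: "drop (Suc (pos e i)) e = replicate a RP @ C" using e1 p by simp
    have tw: "length (takeWhile (\<lambda>c. c = RP) (drop (Suc (pos e i)) e)) = a"
      using dr C by (simp add: tw_rep)
    obtain l r where s: "s = Node l r" using h(2) by (cases s) auto
    have q: "pos e i + a = length P + length (expr_from s j) - 1" using p h(3) by simp
    have e2: "e = P @ expr_from s j @ C" using h(1) ee by simp
    have m: "match e (pos e i + a) = length P"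
      using q match_eq[OF e2, of l r j] s by simp
    obtain c rest where cr: "expr_from s j = replicate c LP @ X j # rest" using lead by blast
    have dm: "drop (length P) e = replicate c LP @ X j # (rest @ C)" using e2 cr by simp
    have tw2: "length (takeWhile (\<lambda>c. c = LP) (drop (length P) e)) = c"
      using dm by (simp add: tw_rep)
    have ej: "e ! (length P + c) = X j" using e2 cr by (simp add: nth_append)
    have "name_comp e i = j" unfolding name_comp_def Let_def using nlp tw m tw2 ej by auto
    then show ?thesis using h(9) by simp
  qed
  then show ?thesis by (simp add: e_def)
qed


lemma tree_name_nm: "tree_name t = map (nm t 1) [1..<Suc (internal t)]"
  unfolding tree_name_def
  apply (rule map_cong, rule refl)
  apply (rule name_nm)
   apply auto
  done

lemma nm_range: "k \<le> i \<Longrightarrow> i < k + leaves t \<Longrightarrow> k \<le> nm t k i \<and> nm t k i \<le> i"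
proof (induction t arbitrary: k)
  case Leaf then show ?case by simp
next
  case (Node l r)
  show ?case
  proof (cases "i = k + leaves l + leaves r - 1")
    case True then show ?thesis using Node.prems by simp
  next
    case F: False
    show ?thesis
    proof (cases "i < k + leaves l")
      case True then show ?thesis using F Node.IH(1)[of k] Node.prems by simp
    next
      case False
      then have "k + leaves l \<le> nm r (k + leaves l) i \<and> nm r (k + leaves l) i \<le> i"
        using Node.IH(2)[of "k + leaves l"] Node.prems by simp
      then show ?thesis using F False by simp
    qed
  qed
qed

lemma comb: "(\<forall>i\<in>{2..internal t}. nm t 1 i \<noteq> i) \<Longrightarrow> \<forall>i\<in>{1..internal t}. nm t 1 i = 1"
proof (induction t)
  case Leaf then show ?case by simp
next
  case (Node l r)
  show ?case
  proof (cases r)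
    case (Node r1 r2)
    let ?i = "1 + leaves l"
    have lr: "leaves r \<ge> 2" using Node leaves_pos[of r1] leaves_pos[of r2] by simp
    have "?i \<in> {2..internal (Node l r)}" using lr leaves_pos[of l] by (simp add: leaves_internal)
    moreover have "nm (Node l r) 1 ?i = ?i" using lr nm_left[of r ?i] by simp
    ultimately show ?thesis using Node.prems by blast
  next
    case Leaf
    have il: "internal (Node l r) = leaves l" using Leaf by (simp add: leaves_internal)
    have eq: "nm (Node l r) 1 i = nm l 1 i" if "i < leaves l" for i using that Leaf by simp
    have "\<forall>i\<in>{2..internal l}. nm l 1 i \<noteq> i"
      using Node.prems eq il by (auto simp: leaves_internal)
    then have "\<forall>i\<in>{1..internal l}. nm l 1 i = 1" using Node.IH(1) by blast
    moreover have "nm (Node l r) 1 (leaves l) = 1" using Leaf nm_right[of l 1] by simp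
    ultimately show ?thesis using eq il Leaf
      by (metis atLeastAtMost_iff le_neq_implies_less less_Suc_eq_le leaves_internal)
  qed
qed

fun rr :: "tree \<Rightarrow> tree" where
  "rr Leaf = Node Leaf Leaf"
| "rr (Node l r) = Node l (rr r)"

lemma rr_leaves[simp]: "leaves (rr t) = Suc (leaves t)" by (induction t) auto
lemma rr_internal[simp]: "internal (rr t) = Suc (internal t)" by (induction t) auto

lemma nm_rr_other: "i < k + leaves t - 1 \<Longrightarrow> nm (rr t) k i = nm t k i"
  by (induction t arbitrary: k) (auto simp: leaves_internal)

lemma nm_rr_last: "nm (rr t) k (k + leaves t - 1) = k + leaves t - 1"
proof (induction t arbitrary: k)
  case Leaf then show ?case by simp
next
  case (Node l r)
  have "leaves r \<ge> 1" "leaves l \<ge> 1" using leaves_pos by auto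
  then show ?case using Node.IH(2)[of "k + leaves l"] by (auto simp: add.assoc)
qed

fun build :: "nat \<Rightarrow> nat set \<Rightarrow> tree" where
  "build 0 T = Leaf"
| "build (Suc n) T = (if Suc n \<in> T then rr (build n T) else Node (build n T) Leaf)"

lemma build_internal[simp]: "internal (build n T) = n"
  by (induction n) auto

lemma build_leaves[simp]: "leaves (build n T) = Suc n"
  by (simp add: leaves_internal)

lemma nm_build: "1 \<notin> T \<Longrightarrow> 1 \<le> i \<Longrightarrow> i \<le> n \<Longrightarrow> nm (build n T) 1 i = (if i \<in> T then i else 1)"
proof (induction n arbitrary: i)
  case 0 then show ?case by simp
next
  case (Suc n)
  show ?case
  proof (cases "i \<le> n")
    case True
    then have "nm (build (Suc n) T) 1 i = nm (build n T) 1 i"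
      using nm_rr_other[of i 1 "build n T"] by auto
    then show ?thesis using Suc True by simp
  next
    case False
    then have i: "i = Suc n" using Suc by simp
    show ?thesis
    proof (cases "Suc n \<in> T")
      case True
      then show ?thesis using nm_rr_last[of "build n T" 1] i by simp
    next
      case False
      then show ?thesis using nm_right[of "build n T" 1] i by simp
    qed
  qed
qed


declare upt_Suc[simp del]

definition vT :: "nat \<Rightarrow> nat set \<Rightarrow> nat list" where
  "vT n T = map (\<lambda>i. if i \<in> T then i else 1) [1..<Suc n]"

lemma names_obtain:
  assumes "v \<in> names n"
  obtains t where "internal t = n" "v = map (nm t 1) [1..<Suc n]"
  using assms unfolding names_def by (auto simp: tree_name_nm)

lemma nth_map_upt1: "i \<in> {1..n} \<Longrightarrow> map f [1..<Suc n] ! (i - 1) = f i"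
  by (auto simp del: upt_Suc simp: nth_map)

lemma F1: "v \<in> names n \<Longrightarrow> length v = n"
  by (erule names_obtain) simp

lemma F2: "v \<in> names n \<Longrightarrow> i \<in> {1..n} \<Longrightarrow> 1 \<le> v ! (i - 1) \<and> v ! (i - 1) \<le> i"
proof (erule names_obtain)
  fix t assume t: "internal t = n" "v = map (nm t 1) [1..<Suc n]" and i: "i \<in> {1..n}"
  have "1 \<le> nm t 1 i \<and> nm t 1 i \<le> i" using nm_range[of 1 i t] i t by (simp add: leaves_internal)
  moreover have "v ! (i - 1) = nm t 1 i" by (simp only: t nth_map_upt1[OF i])
  ultimately show ?thesis by simp
qed

lemma F3: "v \<in> names n \<Longrightarrow> \<forall>i\<in>{2..n}. v ! (i - 1) \<noteq> i \<Longrightarrow> v = replicate n 1"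
proof (erule names_obtain)
  fix t assume t: "internal t = n" "v = map (nm t 1) [1..<Suc n]" and h: "\<forall>i\<in>{2..n}. v ! (i - 1) \<noteq> i"
  have "\<forall>i\<in>{2..internal t}. nm t 1 i \<noteq> i"
  proof
    fix i assume i: "i \<in> {2..internal t}"
    then have "i \<in> {1..n}" using t by simp
    moreover have "v ! (i - 1) = nm t 1 i" by (simp only: t nth_map_upt1[OF \<open>i \<in> {1..n}\<close>])
    moreover have "i \<in> {2..n}" using i t(1) by simp
    ultimately show "nm t 1 i \<noteq> i" using h by metis
  qed
  then have c: "\<forall>i\<in>{1..n}. nm t 1 i = 1" using comb t by blast
  show ?thesis
  proof (rule nth_equalityI)
    show "length v = length (replicate n 1)" using t by simp
  next
    fix j assume "j < length v"
    then have j: "j < n" using t by simp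
    then have "v ! j = nm t 1 (Suc j)" using t nth_map_upt1[of "Suc j" n "nm t 1"] by simp
    then show "v ! j = replicate n 1 ! j" using c j by simp
  qed
qed

lemma F4: "T \<subseteq> {2..n} \<Longrightarrow> vT n T \<in> names n"
proof -
  assume T: "T \<subseteq> {2..n}"
  have "tree_name (build n T) = vT n T"
    unfolding tree_name_nm vT_def build_internal
    by (rule map_cong, rule refl, rule nm_build) (use T in auto)
  then show ?thesis unfolding names_def by (metis (mono_tags, lifting) build_internal image_eqI mem_Collect_eq)
qed

lemma vT_nth: "i \<in> {1..n} \<Longrightarrow> vT n T ! (i - 1) = (if i \<in> T then i else 1)"
  unfolding vT_def by (rule nth_map_upt1)

lemma vT_len[simp]: "length (vT n T) = n" by (simp add: vT_def)

lemma comp_le_sum: "list_all2 (\<le>) (z::nat list) y \<Longrightarrow> sum_list z \<le> sum_list y \<and> (z \<noteq> y \<longrightarrow> sum_list z < sum_list y)"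
proof (induction rule: list_all2_induct)
  case Nil then show ?case by simp
next
  case (Cons a as b bs)
  then show ?case by (cases "as = bs") auto
qed

lemma mob_uniq:
  fixes f1 f2 :: "nat list \<Rightarrow> int"
  assumes h1: "\<And>y. f1 y = (if y \<in> S \<and> x \<in> S \<and> comp_le x y then (if y = x then 1 else - (\<Sum>z\<in>{z\<in>S. comp_le x z \<and> comp_le z y \<and> z \<noteq> y}. f1 z)) else 0)"
  and h2: "\<And>y. f2 y = (if y \<in> S \<and> x \<in> S \<and> comp_le x y then (if y = x then 1 else - (\<Sum>z\<in>{z\<in>S. comp_le x z \<and> comp_le z y \<and> z \<noteq> y}. f2 z)) else 0)"
  shows "f1 y = f2 y"
proof (induction "sum_list y" arbitrary: y rule: less_induct)
  case less
  have "(\<Sum>z\<in>{z\<in>S. comp_le x z \<and> comp_le z y \<and> z \<noteq> y}. f1 z) = (\<Sum>z\<in>{z\<in>S. comp_le x z \<and> comp_le z y \<and> z \<noteq> y}. f2 z)"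
  proof (rule sum.cong[OF refl])
    fix z assume "z \<in> {z\<in>S. comp_le x z \<and> comp_le z y \<and> z \<noteq> y}"
    then have "sum_list z < sum_list y" using comp_le_sum unfolding comp_le_def by blast
    then show "f1 z = f2 z" using less by blast
  qed
  note e = h1[of y] h2[of y]
  show ?case
  proof (cases "y \<in> S \<and> x \<in> S \<and> comp_le x y")
    case True
    show ?thesis
    proof (cases "y = x")
      case True2: True
      show ?thesis by (subst e(1), subst e(2)) (simp add: True True2)
    next
      case False
      show ?thesis apply (subst e(1), subst e(2)) using True False \<open>(\<Sum>z\<in>_. f1 z) = _\<close> by presburger
    qed
  next
    case False
    show ?thesis by (subst e(1), subst e(2)) (simp only: False if_False)
  qed
qed

lemma alt_pow: "finite D \<Longrightarrow> D \<noteq> {} \<Longrightarrow> (\<Sum>T\<in>Pow D. (-1::int) ^ card T) = 0"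
proof -
  assume D: "finite D" "D \<noteq> {}"
  then obtain a where a: "a \<in> D" by blast
  define F where "F = D - {a}"
  have aF: "D = insert a F" "a \<notin> F" using a unfolding F_def by auto
  have fF: "finite F" using D aF by simp
  have u: "Pow D = Pow F \<union> insert a ` Pow F" using aF by (simp add: Pow_insert)
  have di: "Pow F \<inter> insert a ` Pow F = {}" using aF by auto
  have inj: "inj_on (insert a) (Pow F)"
  proof (rule inj_onI)
    fix x y assume "x \<in> Pow F" "y \<in> Pow F" "insert a x = insert a y"
    then have "a \<notin> x" "a \<notin> y" using aF(2) by auto
    then show "x = y" using \<open>insert a x = insert a y\<close> by (simp add: insert_ident)
  qed
  have c: "(-1::int) ^ card (insert a T) = - ((-1) ^ card T)" if "T \<in> Pow F" for T
  proof -
    have "finite T" "a \<notin> T" using that aF fF finite_subset by auto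
    then show ?thesis by simp
  qed
  have "(\<Sum>T\<in>Pow D. (-1::int) ^ card T) = (\<Sum>T\<in>Pow F. (-1::int) ^ card T) + (\<Sum>T\<in>insert a ` Pow F. (-1::int) ^ card T)"
    unfolding u using fF di by (intro sum.union_disjoint) auto
  also have "(\<Sum>T\<in>insert a ` Pow F. (-1::int) ^ card T) = (\<Sum>T\<in>Pow F. (-1::int) ^ card (insert a T))"
    using inj by (simp add: sum.reindex)
  also have "\<dots> = (\<Sum>T\<in>Pow F. - ((-1::int) ^ card T))" using c by (rule sum.cong[OF refl])
  finally show ?thesis by (simp add: sum_negf)
qed

theorem mainTheorem3:
  fixes n :: nat and v :: "nat list"
  assumes "n \<ge> 1" and "v \<in> names n"
  shows "mobius (names n) comp_le (replicate n 1) v =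
    (if \<forall>i\<in>{1..n}. v ! (i - 1) \<in> {1, i}
     then (-1) ^ card {i\<in>{2..n}. v ! (i - 1) = i}
     else 0)"
proof -
  define S where "S = names n"
  define bot where "bot = replicate n (1::nat)"
  define g :: "nat list \<Rightarrow> int" where "g y = (if y \<in> S \<and> (\<forall>i\<in>{1..n}. y ! (i - 1) \<in> {1, i})
      then (-1) ^ card {i\<in>{2..n}. y ! (i - 1) = i} else 0)" for y
  define P where "P f = (\<forall>y. f y = (if y \<in> S \<and> bot \<in> S \<and> comp_le bot y then
         (if y = bot then 1 else - (\<Sum>z\<in>{z\<in>S. comp_le bot z \<and> comp_le z y \<and> z \<noteq> y}. f z))
       else 0))" for f :: "nat list \<Rightarrow> int"
  have mob: "mobius S comp_le bot = (THE f. P f)" unfolding mobius_def P_def by simp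
  have botv: "bot = vT n {}" unfolding bot_def vT_def by (simp add: map_replicate_const)
  have botS: "bot \<in> S" unfolding botv S_def by (rule F4) simp
  have lebot: "comp_le bot y" if "y \<in> S" for y
  proof -
    have "length y = n" using F1 that S_def by simp
    moreover have "1 \<le> y ! j" if "j < n" for j
      using F2[of y n "Suc j"] \<open>y \<in> S\<close> S_def that by simp
    ultimately show ?thesis unfolding comp_le_def bot_def by (simp add: list_all2_conv_all_nth)
  qed
  have gvT: "g (vT n T) = (-1) ^ card T" if T: "T \<subseteq> {2..n}" for T
  proof -
    have "vT n T \<in> S" using F4[OF T] S_def by simp
    moreover have "\<forall>i\<in>{1..n}. vT n T ! (i - 1) \<in> {1, i}"
    proof
      fix i :: nat assume "i \<in> {1..n}"
      then show "vT n T ! (i - 1) \<in> {1, i}" using vT_nth[of i n T] by simp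
    qed
    moreover have "{i\<in>{2..n}. vT n T ! (i - 1) = i} = T"
    proof (rule set_eqI)
      fix i :: nat
      show "i \<in> {i\<in>{2..n}. vT n T ! (i - 1) = i} \<longleftrightarrow> i \<in> T"
      proof (cases "i \<in> {2..n}")
        case True
        then have "i \<in> {1..n}" by simp
        then show ?thesis using vT_nth[of i n T] True by auto
      next
        case False then show ?thesis using T by auto
      qed
    qed
    ultimately show ?thesis unfolding g_def by simp
  qed
  have gform: "\<exists>T. T \<subseteq> {2..n} \<and> z = vT n T \<and> T = {i\<in>{2..n}. z ! (i - 1) = i}"
    if "z \<in> S" "\<forall>i\<in>{1..n}. z ! (i - 1) \<in> {1, i}" for z
  proof (intro exI conjI)
    let ?T = "{i\<in>{2..n}. z ! (i - 1) = i}"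
    show "?T \<subseteq> {2..n}" by auto
    show "?T = ?T" ..
    show "z = vT n ?T"
    proof (rule nth_equalityI)
      show "length z = length (vT n ?T)" using F1 that S_def by simp
    next
      fix j assume "j < length z"
      then have j: "j < n" using F1 that S_def by simp
      then have "Suc j \<in> {1..n}" by simp
      then have zj: "z ! j = 1 \<or> z ! j = Suc j" using that(2) by fastforce
      have vj: "vT n ?T ! j = (if Suc j \<in> ?T then Suc j else 1)" using vT_nth[of "Suc j" n ?T] \<open>Suc j \<in> {1..n}\<close> by simp
      show "z ! j = vT n ?T ! j"
      proof (cases "j = 0")
        case True then show ?thesis using zj vj by auto
      next
        case False then show ?thesis using zj vj j by auto
      qed
    qed
  qed
  have Pg: "P g"
    unfolding P_def
  proof
    fix y
    show "g y = (if y \<in> S \<and> bot \<in> S \<and> comp_le bot y then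
         (if y = bot then 1 else - (\<Sum>z\<in>{z\<in>S. comp_le bot z \<and> comp_le z y \<and> z \<noteq> y}. g z))
       else 0)"
    proof (cases "y \<in> S")
      case False then show ?thesis by (simp add: g_def)
    next
      case yS: True
      show ?thesis
      proof (cases "y = bot")
        case True
        have "g bot = g (vT n {})" using botv by simp
        also have "\<dots> = 1" using gvT[of "{}"] by simp
        finally show ?thesis using True yS botS lebot by simp
      next
        case ynb: False
        define D where "D = {i\<in>{2..n}. y ! (i - 1) = i}"
        have Dne: "D \<noteq> {}"
        proof
          assume "D = {}"
          then have "\<forall>i\<in>{2..n}. y ! (i - 1) \<noteq> i" unfolding D_def by auto
          then have "y = bot" using F3[of y n] yS S_def bot_def by simp
          then show False using ynb by simp
        qed
        have Dsub: "D \<subseteq> {2..n}" unfolding D_def by auto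
        have fD: "finite D" using Dsub finite_subset by blast
        define Z' where "Z' = {z\<in>S. comp_le bot z \<and> comp_le z y}"
        define Z where "Z = {z\<in>S. comp_le bot z \<and> comp_le z y \<and> z \<noteq> y}"
        have Z'eq: "Z' = insert y Z" "y \<notin> Z"
          using yS lebot unfolding Z'_def Z_def comp_le_def by (auto simp: list_all2_refl)
        have fZ': "finite Z'"
        proof (rule finite_subset)
          show "Z' \<subseteq> {xs. set xs \<subseteq> {0..sum_list y} \<and> length xs = n}"
          proof
            fix z assume z: "z \<in> Z'"
            then have l: "list_all2 (\<le>) z y" "z \<in> S" unfolding Z'_def comp_le_def by auto
            have "sum_list z \<le> sum_list y" using comp_le_sum[OF l(1)] by simp
            then have "set z \<subseteq> {0..sum_list y}" using member_le_sum_list[of _ z] by fastforce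
            moreover have "length z = n" using F1 l(2) S_def by simp
            ultimately show "z \<in> {xs. set xs \<subseteq> {0..sum_list y} \<and> length xs = n}" by simp
          qed
          show "finite {xs. set xs \<subseteq> {0..sum_list y} \<and> length xs = (n::nat)}"
            by (rule finite_lists_length_eq) simp
        qed
        have sub: "vT n ` Pow D \<subseteq> Z'"
        proof
          fix z assume "z \<in> vT n ` Pow D"
          then obtain T where T: "T \<subseteq> D" "z = vT n T" by auto
          have "z \<in> S" using F4[of T n] T Dsub S_def by auto
          moreover have "comp_le z y"
          proof -
            have "length y = n" using F1 yS S_def by simp
            moreover have "vT n T ! j \<le> y ! j" if "j < n" for j
            proof -
              have sj: "Suc j \<in> {1..n}" using that by simp
              have "1 \<le> y ! j" using F2[of y n "Suc j"] yS S_def sj by simp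
              moreover have "Suc j \<in> T \<Longrightarrow> y ! j = Suc j" using T(1) unfolding D_def by auto
              ultimately show ?thesis using vT_nth[OF sj, of T] by auto
            qed
            ultimately show ?thesis unfolding comp_le_def T(2) by (simp add: list_all2_conv_all_nth)
          qed
          ultimately show "z \<in> Z'" unfolding Z'_def using lebot by simp
        qed
        have zero: "\<forall>z\<in>Z' - vT n ` Pow D. g z = 0"
        proof
          fix z assume z: "z \<in> Z' - vT n ` Pow D"
          show "g z = 0"
          proof (rule ccontr)
            assume "g z \<noteq> 0"
            then have zc: "z \<in> S" "\<forall>i\<in>{1..n}. z ! (i - 1) \<in> {1, i}" unfolding g_def by (auto split: if_splits)
            obtain T where T: "T \<subseteq> {2..n}" "z = vT n T" "T = {i\<in>{2..n}. z ! (i - 1) = i}"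
              using gform[OF zc] by blast
            have "T \<subseteq> D"
            proof
              fix i assume i: "i \<in> T"
              then have i2: "i \<in> {2..n}" "z ! (i - 1) = i" using T(3) by auto
              have "list_all2 (\<le>) z y" using z unfolding Z'_def comp_le_def by auto
              moreover have "i - 1 < length z" using i2 F1 zc S_def by auto
              ultimately have "z ! (i - 1) \<le> y ! (i - 1)" by (simp add: list_all2_conv_all_nth)
              moreover have "y ! (i - 1) \<le> i" using F2[of y n i] yS S_def i2 by simp
              ultimately show "i \<in> D" unfolding D_def using i2 by simp
            qed
            then show False using z T(2) by auto
          qed
        qed
        have injv: "inj_on (vT n) (Pow D)"
        proof (rule inj_onI)
          fix A B assume AB: "A \<in> Pow D" "B \<in> Pow D" "vT n A = vT n B"
          have "i \<in> A \<longleftrightarrow> i \<in> B" for i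
          proof (cases "i \<in> {2..n}")
            case True
            then have "i \<in> {1..n}" by simp
            then have "(if i \<in> A then i else 1) = (if i \<in> B then i else 1)"
              using vT_nth[of i n A] vT_nth[of i n B] AB(3) by simp
            then show ?thesis using True by (auto split: if_splits)
          next
            case False then show ?thesis using AB Dsub by auto
          qed
          then show "A = B" by auto
        qed
        have "(\<Sum>z\<in>Z'. g z) = (\<Sum>z\<in>vT n ` Pow D. g z)"
          using sum.mono_neutral_right[OF fZ' sub zero] .
        also have "\<dots> = (\<Sum>T\<in>Pow D. g (vT n T))" using injv by (simp add: sum.reindex)
        also have "\<dots> = (\<Sum>T\<in>Pow D. (-1) ^ card T)"
          using gvT Dsub by (intro sum.cong) auto
        also have "\<dots> = 0" using alt_pow[OF fD Dne] .
        finally have s0: "(\<Sum>z\<in>Z'. g z) = 0" .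
        have fZ: "finite Z" using fZ' Z'eq by simp
        have "(\<Sum>z\<in>Z'. g z) = g y + (\<Sum>z\<in>Z. g z)" using Z'eq fZ by simp
        then have "g y = - (\<Sum>z\<in>Z. g z)" using s0 by simp
        then show ?thesis using yS botS lebot ynb unfolding Z_def by simp
      qed
    qed
  qed
  have uniq: "f = g" if "P f" for f
  proof
    fix y
    have h1: "\<And>y. f y = (if y \<in> S \<and> bot \<in> S \<and> comp_le bot y then
         (if y = bot then 1 else - (\<Sum>z\<in>{z\<in>S. comp_le bot z \<and> comp_le z y \<and> z \<noteq> y}. f z))
       else 0)" using that unfolding P_def by blast
    have h2: "\<And>y. g y = (if y \<in> S \<and> bot \<in> S \<and> comp_le bot y then
         (if y = bot then 1 else - (\<Sum>z\<in>{z\<in>S. comp_le bot z \<and> comp_le z y \<and> z \<noteq> y}. g z))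
       else 0)" using Pg unfolding P_def by blast
    show "f y = g y" by (rule mob_uniq[OF h1 h2])
  qed
  have "mobius S comp_le bot = g" unfolding mob using Pg uniq by (rule the_equality)
  then have "mobius S comp_le bot v = g v" by simp
  then show ?thesis using assms(2) unfolding S_def bot_def g_def by simp
qed

end
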